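(* Let $E_1,\dots,E_N$ be a symmetric sequence of events with probability functions $P_k$ and correlation functions $G_k$. Then for every $k\in\{1,\dots,N\}$ and all $r_1,\dots,r_k\in\{0,1\}$, $$P_k(r_1,\dots,r_k)=\sum_{\pi}\prod_{B\in\pi}G_{|B|}(r_B),$$ where $\pi$ runs over all set partitions of $\{1,\dots,k\}$ into nonempty blocks, and for a block $B=\{i_1<\dots<i_m\}$ we write $r_B:=(r_{i_1},\dots,r_{i_m})$. Equivalently, $G_k(r_1,\dots,r_k)$ equals $P_k(r_1,\dots,r_k)$ minus the sum of $\prod_{B\in\pi}G_{|B|}(r_B)$ over all set partitions $\pi$ of $\{1,\dots,k\}$ with at least two blocks.
   Context: $\mathbbm{1}_E$ is the indicator function of an event $E$. A finite sequence of events $E_1,\dots,E_N$ on a common probability space is called symmetric if for all $r_1,\dots,r_N\in\{0,1\}$ and all permutations $\sigma$ of $\{1,\dots,N\}$, $P(\mathbbm{1}_{E_1}=r_1,\dots,\mathbbm{1}_{E_N}=r_N)=P(\mathbbm{1}_{E_1}=r_{\sigma(1)},\dots,\mathbbm{1}_{E_N}=r_{\sigma(N)})$. For $1\le k\le N$ the probability function of order $k$ is $P_k(r_1,\dots,r_k):=\sum_{r_{k+1},\dots,r_N\in\{0,1\}}P(\mathbbm{1}_{E_1}=r_1,\dots,\mathbbm{1}_{E_N}=r_N)$. The correlation functions $G_k:\{0,1\}^k\to\mathbb{R}$ are defined by $G_1:=P_1$ and, recursively for $1<k\le N$, $$G_k(r_1,\dots,r_k):=P_k(r_1,\dots,r_k)-\sum_{\sigma}\sum_{l=1}^{k-1}\frac{1}{(l-1)!\,(k-l)!}G_l(r_1,r_{\sigma(2)},\dots,r_{\sigma(l)})\,P_{k-l}(r_{\sigma(l+1)},\dots,r_{\sigma(k)}),$$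 where $\sigma$ runs over all permutations of $\{2,\dots,k\}$. *)

theory Defs
  imports "HOL-Probability.Probability" "HOL-Combinatorics.Permutations" "HOL-Library.Disjoint_Sets"
begin

text \<open>Tuples (r_1,...,r_k) are represented as functions r :: nat \<Rightarrow> nat, of which
  only the values r 1, ..., r k are relevant; entries are meant to lie in {0,1}.\<close>

definition jointP :: "'a measure \<Rightarrow> (nat \<Rightarrow> 'a set) \<Rightarrow> nat \<Rightarrow> (nat \<Rightarrow> nat) \<Rightarrow> real" where
  "jointP M E N r = measure M {\<omega> \<in> space M. \<forall>i\<in>{1..N}. indicator (E i) \<omega> = real (r i)}"

definition symmetric_events :: "'a measure \<Rightarrow> (nat \<Rightarrow> 'a set) \<Rightarrow> nat \<Rightarrow> bool" where
  "symmetric_events M E N \<longleftrightarrow>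
     (\<forall>r \<sigma>. (\<forall>i\<in>{1..N}. r i \<in> {0,1}) \<longrightarrow> \<sigma> permutes {1..N} \<longrightarrow>
        jointP M E N r = jointP M E N (r \<circ> \<sigma>))"

definition probP :: "'a measure \<Rightarrow> (nat \<Rightarrow> 'a set) \<Rightarrow> nat \<Rightarrow> nat \<Rightarrow> (nat \<Rightarrow> nat) \<Rightarrow> real" where
  "probP M E N k r = (\<Sum>s\<in>PiE {k+1..N} (\<lambda>_. {0::nat,1}).
      jointP M E N (\<lambda>i. if i \<le> k then r i else s i))"

function corrG :: "(nat \<Rightarrow> (nat \<Rightarrow> nat) \<Rightarrow> real) \<Rightarrow> nat \<Rightarrow> (nat \<Rightarrow> nat) \<Rightarrow> real" where
  "corrG P k r =
    (if k \<le> 1 then P k r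
     else P k r -
       (\<Sum>\<sigma>\<in>{\<sigma>. \<sigma> permutes {2..k}}. \<Sum>l\<in>{1..k-1}.
          (1 / (fact (l - 1) * fact (k - l))) *
          corrG P l (\<lambda>j. if j = 1 then r 1 else r (\<sigma> j)) *
          P (k - l) (\<lambda>j. r (\<sigma> (l + j)))))"
  by pat_completeness auto
termination
  by (relation "Wellfounded.measure (\<lambda>(P, k, r). k)") auto

definition subtuple :: "(nat \<Rightarrow> nat) \<Rightarrow> nat set \<Rightarrow> nat \<Rightarrow> nat" where
  "subtuple r B = (\<lambda>j. r (sorted_list_of_set B ! (j - 1)))"

end

theory Submission
  imports Defs
begin



definition good :: "(nat \<Rightarrow> nat) \<Rightarrow> bool" where
  "good q \<longleftrightarrow> (\<forall>i. q i \<in> {0,1})"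

lemma good_comp: "good q \<Longrightarrow> good (q \<circ> f)"
  by (simp add: good_def)

lemma bij_transfer:
  fixes H :: "(nat \<Rightarrow> nat) \<Rightarrow> real"
  assumes loc: "\<And>q q'. (\<And>i. i\<in>{1..l} \<Longrightarrow> q i = q' i) \<Longrightarrow> H q = H q'"
    and sym: "\<And>q \<tau>. good q \<Longrightarrow> \<tau> permutes {1..l} \<Longrightarrow> H (q \<circ> \<tau>) = H q"
    and f: "bij_betw f {1..l} U" and g: "bij_betw g {1..l} U" and r: "good r"
  shows "H (r \<circ> f) = H (r \<circ> g)"
proof -
  define \<tau> where "\<tau> = (\<lambda>x. if x \<in> {1..l} then inv_into {1..l} g (f x) else x)"
  have b1: "bij_betw (inv_into {1..l} g \<circ> f) {1..l} {1..l}"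
    using f g bij_betw_inv_into bij_betw_trans by blast
  have "bij_betw \<tau> {1..l} {1..l}"
    by (rule bij_betw_cong[THEN iffD1, OF _ b1]) (simp add: \<tau>_def)
  hence tp: "\<tau> permutes {1..l}"
    by (rule bij_imp_permutes) (auto simp add: \<tau>_def)
  have "H (r \<circ> f) = H ((r \<circ> g) \<circ> \<tau>)"
  proof (rule loc)
    fix i assume i: "i \<in> {1..l}"
    have "f i \<in> U" by (rule bij_betw_apply[OF f i])
    hence "f i \<in> g ` {1..l}" using g by (simp add: bij_betw_imp_surj_on)
    then show "(r \<circ> f) i = (r \<circ> g \<circ> \<tau>) i"
      using i by (simp add: \<tau>_def f_inv_into_f)
  qed
  also have "\<dots> = H (r \<circ> g)"
    by (rule sym[OF good_comp[OF r] tp])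
  finally show ?thesis .
qed

lemma sub_bij:
  assumes "finite U"
  shows "bij_betw (\<lambda>j. sorted_list_of_set U ! (j - 1)) {1..card U} U"
proof -
  have a: "bij_betw (\<lambda>j. j - 1) {1..card U} {..<card U}"
    by (rule bij_betw_byWitness[where f'="\<lambda>j. j + 1"]) auto
  have b: "bij_betw ((!) (sorted_list_of_set U)) {..<card U} U"
    by (rule bij_betw_nth) (use assms in auto)
  show ?thesis using bij_betw_trans[OF a b] by (simp add: o_def)
qed

lemma subtuple_comp: "subtuple r U = r \<circ> (\<lambda>j. sorted_list_of_set U ! (j - 1))"
  by (simp add: subtuple_def o_def)

lemma perm_exists:
  assumes A: "finite A" and B: "B \<subseteq> A" and S: "S \<subseteq> A" and c: "card S = card B"
  shows "\<exists>\<sigma>. \<sigma> permutes A \<and> \<sigma> ` B = S"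
proof -
  have fB: "finite B" and fS: "finite S" using A B S finite_subset by auto
  obtain g where g: "bij_betw g B S" using finite_same_card_bij[OF fB fS] c by auto
  have "card (A - B) = card (A - S)" using A B S c by (simp add: card_Diff_subset fB fS)
  then obtain h where h: "bij_betw h (A - B) (A - S)"
    using finite_same_card_bij A by (meson finite_Diff)
  define \<sigma> where "\<sigma> = (\<lambda>x. if x \<in> B then g x else if x \<in> A then h x else x)"
  have "bij_betw (\<lambda>x. if x \<in> B then g x else h x) (B \<union> (A - B)) (S \<union> (A - S))"
    by (rule bij_betw_disjoint_Un[OF g h]) auto
  moreover have "B \<union> (A - B) = A" "S \<union> (A - S) = A" using B S by auto
  ultimately have bb: "bij_betw (\<lambda>x. if x \<in> B then g x else h x) A A" by simp
  have "bij_betw \<sigma> A A"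
    by (rule bij_betw_cong[THEN iffD1, OF _ bb]) (auto simp: \<sigma>_def)
  have tp: "\<sigma> permutes A"
    by (rule bij_imp_permutes[OF \<open>bij_betw \<sigma> A A\<close>]) (use B in \<open>auto simp: \<sigma>_def\<close>)
  have "\<sigma> ` B = g ` B" by (simp add: \<sigma>_def)
  also have "\<dots> = S" using g by (simp add: bij_betw_def)
  finally show ?thesis using tp by blast
qed

lemma perm_image_sum:
  fixes F :: "'b set \<Rightarrow> real"
  assumes A: "finite A" and B: "B \<subseteq> A"
  shows "(\<Sum>\<sigma>\<in>{\<sigma>. \<sigma> permutes A}. F (\<sigma> ` B)) =
     fact (card B) * fact (card A - card B) * (\<Sum>S\<in>{S. S \<subseteq> A \<and> card S = card B}. F S)"
proof -
  let ?P = "{\<sigma>. \<sigma> permutes A}"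
  let ?S = "{S. S \<subseteq> A \<and> card S = card B}"
  let ?fib = "\<lambda>S. {\<sigma> \<in> ?P. \<sigma> ` B = S}"
  have fP: "finite ?P" using A finite_permutations by blast
  have fB: "finite B" using A B finite_subset by blast
  have img: "(\<lambda>\<sigma>. \<sigma> ` B) ` ?P = ?S"
  proof
    show "(\<lambda>\<sigma>. \<sigma> ` B) ` ?P \<subseteq> ?S"
    proof clarify
      fix \<sigma> assume s: "\<sigma> permutes A"
      have "\<sigma> ` B \<subseteq> A" using B permutes_image[OF s] by blast
      moreover have "card (\<sigma> ` B) = card B"
        using permutes_inj[OF s] by (simp add: card_image inj_on_subset)
      ultimately show "\<sigma> ` B \<subseteq> A \<and> card (\<sigma> ` B) = card B" by blast
    qed
    show "?S \<subseteq> (\<lambda>\<sigma>. \<sigma> ` B) ` ?P"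
      using perm_exists[OF A B] by blast
  qed
  define c where "c = card (?fib B)"
  have fibc: "card (?fib S) = c" if S: "S \<in> ?S" for S
  proof -
    have "S \<in> (\<lambda>\<sigma>. \<sigma> ` B) ` ?P" using S img by simp
    then obtain \<sigma>0 where s0: "\<sigma>0 permutes A" "\<sigma>0 ` B = S" by blast
    have "?fib S = (\<lambda>\<tau>. \<sigma>0 \<circ> \<tau>) ` ?fib B"
    proof
      show "(\<lambda>\<tau>. \<sigma>0 \<circ> \<tau>) ` ?fib B \<subseteq> ?fib S"
      proof
        fix x assume "x \<in> (\<lambda>\<tau>. \<sigma>0 \<circ> \<tau>) ` ?fib B"
        then obtain \<tau> where t: "\<tau> permutes A" "\<tau> ` B = B" and x: "x = \<sigma>0 \<circ> \<tau>" by blast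
        have "(\<sigma>0 \<circ> \<tau>) ` B = \<sigma>0 ` (\<tau> ` B)" by (rule image_comp[symmetric])
        thus "x \<in> ?fib S" using t s0 x by (simp add: permutes_compose)
      qed
      show "?fib S \<subseteq> (\<lambda>\<tau>. \<sigma>0 \<circ> \<tau>) ` ?fib B"
      proof
        fix \<sigma> assume "\<sigma> \<in> ?fib S"
        hence s: "\<sigma> permutes A" "\<sigma> ` B = S" by auto
        have i1: "inv \<sigma>0 \<circ> \<sigma> permutes A" using s s0 permutes_compose permutes_inv by blast
        have "(inv \<sigma>0 \<circ> \<sigma>) ` B = inv \<sigma>0 ` (\<sigma> ` B)" by (rule image_comp[symmetric])
        also have "\<dots> = inv \<sigma>0 ` \<sigma>0 ` B" using s s0 by simp
        also have "\<dots> = B" using permutes_inj[OF s0(1)] by (simp add: image_inv_f_f)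
        finally have "inv \<sigma>0 \<circ> \<sigma> \<in> ?fib B" using i1 by simp
        moreover have "\<sigma> = \<sigma>0 \<circ> (inv \<sigma>0 \<circ> \<sigma>)"
          using permutes_inverses(1)[OF s0(1)] by (simp add: fun_eq_iff)
        ultimately show "\<sigma> \<in> (\<lambda>\<tau>. \<sigma>0 \<circ> \<tau>) ` ?fib B" by blast
      qed
    qed
    moreover have "inj_on (\<lambda>\<tau>. \<sigma>0 \<circ> \<tau>) (?fib B)"
    proof (rule inj_onI)
      fix x y assume "\<sigma>0 \<circ> x = \<sigma>0 \<circ> y"
      hence "inv \<sigma>0 \<circ> \<sigma>0 \<circ> x = inv \<sigma>0 \<circ> \<sigma>0 \<circ> y" by (simp add: comp_assoc)
      thus "x = y" using permutes_inv_o(2)[OF s0(1)] by simp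
    qed
    ultimately show ?thesis by (simp add: card_image c_def)
  qed
  have gen: "(\<Sum>\<sigma>\<in>?P. H (\<sigma> ` B)) = real c * (\<Sum>S\<in>?S. H S)" for H :: "'b set \<Rightarrow> real"
  proof -
    have "(\<Sum>\<sigma>\<in>?P. H (\<sigma> ` B)) = (\<Sum>S\<in>?S. \<Sum>\<sigma>\<in>?fib S. H (\<sigma> ` B))"
      using sum.image_gen[OF fP, of "\<lambda>\<sigma>. H (\<sigma> ` B)" "\<lambda>\<sigma>. \<sigma> ` B"] img by simp
    also have "\<dots> = (\<Sum>S\<in>?S. real c * H S)"
    proof (rule sum.cong[OF refl])
      fix S assume S: "S \<in> ?S"
      have "(\<Sum>\<sigma>\<in>?fib S. H (\<sigma> ` B)) = (\<Sum>\<sigma>\<in>?fib S. H S)" by (rule sum.cong) auto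
      also have "\<dots> = real c * H S" using fibc[OF S] by simp
      finally show "(\<Sum>\<sigma>\<in>?fib S. H (\<sigma> ` B)) = real c * H S" .
    qed
    finally show ?thesis by (simp add: sum_distrib_left)
  qed
  have "real (fact (card A)) = real c * real (card A choose card B)"
    using gen[of "\<lambda>_. 1"] A by (simp add: card_permutations n_subsets)
  moreover have "fact (card B) * fact (card A - card B) * (card A choose card B) = fact (card A)"
    by (rule binomial_fact_lemma) (use A B card_mono in auto)
  moreover have "(card A choose card B) > 0" using A B card_mono by (simp add: zero_less_binomial_iff) 
  ultimately have "real c = fact (card B) * fact (card A - card B)"
    by (metis (no_types, lifting) mult_cancel_right of_nat_0_less_iff of_nat_fact of_nat_mult less_irrefl)
  thus ?thesis using gen[of F] by simp
qed




locale symfam =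
  fixes P :: "nat \<Rightarrow> (nat \<Rightarrow> nat) \<Rightarrow> real" and N :: nat
  assumes Ploc: "\<And>k q q'. (\<And>i. i \<in> {1..k} \<Longrightarrow> q i = q' i) \<Longrightarrow> P k q = P k q'"
    and Psym: "\<And>k q \<tau>. k \<le> N \<Longrightarrow> good q \<Longrightarrow> \<tau> permutes {1..k} \<Longrightarrow> P k (q \<circ> \<tau>) = P k q"
begin

abbreviation G where "G \<equiv> corrG P"

definition Gs where "Gs r U = G (card U) (subtuple r U)"
definition Ps where "Ps r U = P (card U) (subtuple r U)"
definition SymG where "SymG l \<longleftrightarrow> (\<forall>q \<tau>. good q \<longrightarrow> \<tau> permutes {1..l} \<longrightarrow> G l (q \<circ> \<tau>) = G l q)"

lemma Gloc: "(\<And>i. i \<in> {1..k} \<Longrightarrow> q i = q' i) \<Longrightarrow> G k q = G k q'"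
proof (induction k arbitrary: q q' rule: less_induct)
  case (less k)
  show ?case
  proof (cases "k \<le> 1")
    case True
    thus ?thesis unfolding corrG.simps[of P k q] corrG.simps[of P k q']
      using Ploc[of k q q'] less.prems by simp
  next
    case False
    have Pk: "P k q = P k q'" by (rule Ploc) (use less.prems in auto)
    have "(\<Sum>\<sigma>\<in>{\<sigma>. \<sigma> permutes {2..k}}. \<Sum>l\<in>{1..k-1}.
          (1 / (fact (l - 1) * fact (k - l))) *
          G l (\<lambda>j. if j = 1 then q 1 else q (\<sigma> j)) *
          P (k - l) (\<lambda>j. q (\<sigma> (l + j)))) =
          (\<Sum>\<sigma>\<in>{\<sigma>. \<sigma> permutes {2..k}}. \<Sum>l\<in>{1..k-1}.
          (1 / (fact (l - 1) * fact (k - l))) *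
          G l (\<lambda>j. if j = 1 then q' 1 else q' (\<sigma> j)) *
          P (k - l) (\<lambda>j. q' (\<sigma> (l + j))))"
    proof (intro sum.cong refl)
      fix \<sigma> l assume s: "\<sigma> \<in> {\<sigma>. \<sigma> permutes {2..k}}" and l: "l \<in> {1..k-1}"
      have sj: "\<And>j. j \<in> {2..k} \<Longrightarrow> \<sigma> j \<in> {2..k}" using s by (simp only: mem_Collect_eq permutes_in_image)
      have "G l (\<lambda>j. if j = 1 then q 1 else q (\<sigma> j)) = G l (\<lambda>j. if j = 1 then q' 1 else q' (\<sigma> j))"
      proof (rule less.IH)
        show "l < k" using l False by auto
        fix i assume i: "i \<in> {1..l}"
        show "(if i = 1 then q 1 else q (\<sigma> i)) = (if i = 1 then q' 1 else q' (\<sigma> i))"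
        proof (cases "i = 1")
          case False
          hence "\<sigma> i \<in> {2..k}" using sj[of i] i l by auto
          thus ?thesis using False less.prems by auto
        qed (use less.prems False in auto)
      qed
      moreover have "P (k - l) (\<lambda>j. q (\<sigma> (l + j))) = P (k - l) (\<lambda>j. q' (\<sigma> (l + j)))"
      proof (rule Ploc)
        fix i assume i: "i \<in> {1..k-l}"
        show "q (\<sigma> (l + i)) = q' (\<sigma> (l + i))"
        proof -
          have "\<sigma> (l + i) \<in> {2..k}" using sj[of "l+i"] i l by auto
          thus ?thesis using less.prems by auto
        qed
      qed
      ultimately show "(1 / (fact (l - 1) * fact (k - l))) *
          G l (\<lambda>j. if j = 1 then q 1 else q (\<sigma> j)) * P (k - l) (\<lambda>j. q (\<sigma> (l + j))) =
          (1 / (fact (l - 1) * fact (k - l))) *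
          G l (\<lambda>j. if j = 1 then q' 1 else q' (\<sigma> j)) * P (k - l) (\<lambda>j. q' (\<sigma> (l + j)))"
        by simp
    qed
    thus ?thesis unfolding corrG.simps[of P k q] corrG.simps[of P k q'] using False Pk by simp
  qed
qed

lemma Gs_bij:
  assumes "card U = n" "SymG n" "finite U" "good r" "bij_betw f {1..n} U"
  shows "G n (r \<circ> f) = Gs r U"
proof -
  have "G n (r \<circ> f) = G n (r \<circ> (\<lambda>j. sorted_list_of_set U ! (j - 1)))"
  proof (rule bij_transfer[where H="G n"])
    show "\<And>q q'. (\<And>i. i \<in> {1..n} \<Longrightarrow> q i = q' i) \<Longrightarrow> G n q = G n q'" by (rule Gloc)
    show "\<And>q \<tau>. good q \<Longrightarrow> \<tau> permutes {1..n} \<Longrightarrow> G n (q \<circ> \<tau>) = G n q"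
      using assms(2) by (simp add: SymG_def)
    show "bij_betw (\<lambda>j. sorted_list_of_set U ! (j - 1)) {1..n} U"
      using sub_bij[OF assms(3)] assms(1) by simp
  qed (use assms in auto)
  thus ?thesis by (simp add: Gs_def subtuple_comp assms(1))
qed

lemma Ps_bij:
  assumes "card U = n" "n \<le> N" "finite U" "good r" "bij_betw f {1..n} U"
  shows "P n (r \<circ> f) = Ps r U"
proof -
  have "P n (r \<circ> f) = P n (r \<circ> (\<lambda>j. sorted_list_of_set U ! (j - 1)))"
  proof (rule bij_transfer[where H="P n"])
    show "\<And>q q'. (\<And>i. i \<in> {1..n} \<Longrightarrow> q i = q' i) \<Longrightarrow> P n q = P n q'" by (rule Ploc)
    show "\<And>q \<tau>. good q \<Longrightarrow> \<tau> permutes {1..n} \<Longrightarrow> P n (q \<circ> \<tau>) = P n q"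
      using assms(2) Psym by simp
    show "bij_betw (\<lambda>j. sorted_list_of_set U ! (j - 1)) {1..n} U"
      using sub_bij[OF assms(3)] assms(1) by simp
  qed (use assms in auto)
  thus ?thesis by (simp add: Ps_def subtuple_comp assms(1))
qed

lemma Gs_comp:
  assumes "SymG (card U)" "finite U" "good r" "inj_on e U"
  shows "Gs (r \<circ> e) U = Gs r (e ` U)"
proof -
  have c: "card (e ` U) = card U" using assms(4) by (simp add: card_image)
  have "bij_betw (e \<circ> (\<lambda>j. sorted_list_of_set U ! (j - 1))) {1..card U} (e ` U)"
    using bij_betw_trans[OF sub_bij[OF assms(2)], of e "e ` U"] assms(4)
    by (simp add: inj_on_imp_bij_betw)
  hence "G (card U) (r \<circ> (e \<circ> (\<lambda>j. sorted_list_of_set U ! (j - 1)))) = Gs r (e ` U)"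
    using Gs_bij[OF c assms(1) _ assms(3)] assms(2) by simp
  thus ?thesis by (simp add: Gs_def subtuple_comp o_assoc)
qed

lemma Ps_comp:
  assumes "card U \<le> N" "finite U" "good r" "inj_on e U"
  shows "Ps (r \<circ> e) U = Ps r (e ` U)"
proof -
  have c: "card (e ` U) = card U" using assms(4) by (simp add: card_image)
  have "bij_betw (e \<circ> (\<lambda>j. sorted_list_of_set U ! (j - 1))) {1..card U} (e ` U)"
    using bij_betw_trans[OF sub_bij[OF assms(2)], of e "e ` U"] assms(4)
    by (simp add: inj_on_imp_bij_betw)
  hence "P (card U) (r \<circ> (e \<circ> (\<lambda>j. sorted_list_of_set U ! (j - 1)))) = Ps r (e ` U)"
    using Ps_bij[OF c assms(1) _ assms(3)] assms(2) by simp
  thus ?thesis by (simp add: Ps_def subtuple_comp o_assoc)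
qed

end



declare corrG.simps[simp del]

context symfam begin

lemma recR:
  assumes k2: "2 \<le> k" and kN: "k \<le> N" and q: "good q" and sym: "\<And>l. l < k \<Longrightarrow> SymG l"
  shows "G k q = P k q - (\<Sum>S\<in>{S. S \<subseteq> {2..k} \<and> S \<noteq> {2..k}}. Gs q (insert 1 S) * Ps q ({2..k} - S))"
proof -
  define F where "F S = Gs q (insert 1 S) * Ps q ({2..k} - S)" for S
  let ?Pm = "{\<sigma>. \<sigma> permutes {2..k}}"
  have trm: "G l (\<lambda>j. if j = 1 then q 1 else q (\<sigma> j)) * P (k - l) (\<lambda>j. q (\<sigma> (l + j))) = F (\<sigma> ` {2..l})"
    if s: "\<sigma> permutes {2..k}" and l: "l \<in> {1..k-1}" for \<sigma> l
  proof -
    have sj: "\<And>j. j \<in> {2..k} \<Longrightarrow> \<sigma> j \<in> {2..k}" using s by (simp only: permutes_in_image)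
    have inj: "inj \<sigma>" using s by (rule permutes_inj)
    define B where "B = \<sigma> ` {2..l}"
    have fB: "finite B" by (simp add: B_def)
    have Bsub: "B \<subseteq> {2..k}" using sj l by (auto simp: B_def)
    have cB: "card B = l - 1" unfolding B_def
      by (subst card_image) (auto intro: inj_on_subset[OF inj])
    have n1: "1 \<notin> B" using Bsub by auto
    have cIB: "card (insert 1 B) = l" using cB n1 l fB by simp
    define f1 where "f1 = (\<lambda>j::nat. if j = 1 then 1 else \<sigma> j)"
    have bf1: "bij_betw f1 {1..l} (insert 1 B)"
      unfolding bij_betw_def
    proof
      show "inj_on f1 {1..l}"
      proof (rule inj_onI)
        fix x y assume x: "x \<in> {1..l}" and y: "y \<in> {1..l}" and e: "f1 x = f1 y"
        have ax: "\<sigma> x \<noteq> 1" if h: "x \<noteq> 1"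
        proof -
          have "x \<in> {2..k}" using h x l by auto
          from sj[OF this] show ?thesis by auto
        qed
        have ay: "\<sigma> y \<noteq> 1" if h: "y \<noteq> 1"
        proof -
          have "y \<in> {2..k}" using h y l by auto
          from sj[OF this] show ?thesis by auto
        qed
        have e': "(if x = 1 then 1 else \<sigma> x) = (if y = 1 then 1 else \<sigma> y)" using e by (simp add: f1_def)
        show "x = y"
        proof (cases "x = 1"; cases "y = 1")
          assume "x \<noteq> 1" "y \<noteq> 1" thus "x = y" using e' injD[OF inj] by simp
        qed (use e' ax ay in auto)
      qed
      have "{1..l} = insert 1 {2..l}" using l by auto
      moreover have "f1 ` {2..l} = \<sigma> ` {2..l}" by (rule image_cong) (auto simp: f1_def)
      moreover have "f1 1 = 1" by (simp add: f1_def)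
      ultimately show "f1 ` {1..l} = insert 1 B" by (simp add: B_def)
    qed
    have e1: "(\<lambda>j. if j = 1 then q 1 else q (\<sigma> j)) = q \<circ> f1" by (auto simp: f1_def fun_eq_iff)
    have lk: "l < k" using l k2 by auto
    have G1: "G l (q \<circ> f1) = Gs q (insert 1 B)"
      by (rule Gs_bij[OF cIB sym[OF lk] _ q bf1]) (use fB in simp)
    define f2 where "f2 = (\<lambda>j. \<sigma> (l + j))"
    have pl: "plus l ` {1..k-l} = {l+1..k}" using l by (simp add: add.commute, arith)
    have "f2 ` {1..k-l} = \<sigma> ` (plus l ` {1..k-l})" by (simp only: f2_def image_comp o_def)
    hence f2img: "f2 ` {1..k-l} = \<sigma> ` {l+1..k}" by (simp only: pl)
    have "{l+1..k} = {2..k} - {2..l}" using l by auto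
    hence "\<sigma> ` {l+1..k} = \<sigma> ` {2..k} - B" by (simp add: image_set_diff[OF inj] B_def)
    hence C: "\<sigma> ` {l+1..k} = {2..k} - B" using permutes_image[OF s] by simp
    have "inj_on f2 {1..k-l}" by (auto simp: f2_def inj_on_def dest: injD[OF inj])
    hence bf2: "bij_betw f2 {1..k-l} ({2..k} - B)"
      using f2img C by (simp add: bij_betw_def)
    have cC: "card ({2..k} - B) = k - l" using bij_betw_same_card[OF bf2] by simp
    have e2: "(\<lambda>j. q (\<sigma> (l + j))) = q \<circ> f2" by (simp add: f2_def fun_eq_iff)
    have P2: "P (k - l) (q \<circ> f2) = Ps q ({2..k} - B)"
      by (rule Ps_bij[OF cC _ _ q bf2]) (use kN in auto)
    show ?thesis using e1 e2 G1 P2 by (simp add: F_def B_def)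
  qed
  have inner: "(\<Sum>\<sigma>\<in>?Pm. (1 / (fact (l - 1) * fact (k - l))) * G l (\<lambda>j. if j = 1 then q 1 else q (\<sigma> j))
        * P (k - l) (\<lambda>j. q (\<sigma> (l + j)))) = (\<Sum>S\<in>{S. S \<subseteq> {2..k} \<and> card S = l - 1}. F S)"
    if l: "l \<in> {1..k-1}" for l
  proof -
    have "(\<Sum>\<sigma>\<in>?Pm. (1 / (fact (l - 1) * fact (k - l))) * G l (\<lambda>j. if j = 1 then q 1 else q (\<sigma> j))
        * P (k - l) (\<lambda>j. q (\<sigma> (l + j)))) = (\<Sum>\<sigma>\<in>?Pm. (1 / (fact (l - 1) * fact (k - l))) * F (\<sigma> ` {2..l}))"
    proof (rule sum.cong[OF refl])
      fix \<sigma> assume "\<sigma> \<in> ?Pm"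
      hence "G l (\<lambda>j. if j = 1 then q 1 else q (\<sigma> j)) * P (k - l) (\<lambda>j. q (\<sigma> (l + j))) = F (\<sigma> ` {2..l})"
        using trm[OF _ l] by simp
      thus "(1 / (fact (l - 1) * fact (k - l))) * G l (\<lambda>j. if j = 1 then q 1 else q (\<sigma> j))
        * P (k - l) (\<lambda>j. q (\<sigma> (l + j))) = (1 / (fact (l - 1) * fact (k - l))) * F (\<sigma> ` {2..l})"
        by (simp only: mult.assoc)
    qed
    also have "\<dots> = (1 / (fact (l - 1) * fact (k - l))) * (\<Sum>\<sigma>\<in>?Pm. F (\<sigma> ` {2..l}))"
      by (simp add: sum_distrib_left)
    also have "(\<Sum>\<sigma>\<in>?Pm. F (\<sigma> ` {2..l})) = fact (l-1) * fact (k-l) * (\<Sum>S\<in>{S. S \<subseteq> {2..k} \<and> card S = l - 1}. F S)"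
    proof -
      have "Suc k - 2 - (Suc l - 2) = k - l" using l by auto
      moreover have sub: "{2..l} \<subseteq> {2..k}" using l by auto
      ultimately show ?thesis using perm_image_sum[OF _ sub, of F] by simp
    qed
    finally show ?thesis by simp
  qed
  have "G k q = P k q - (\<Sum>\<sigma>\<in>?Pm. \<Sum>l\<in>{1..k-1}. (1 / (fact (l - 1) * fact (k - l))) *
          G l (\<lambda>j. if j = 1 then q 1 else q (\<sigma> j)) * P (k - l) (\<lambda>j. q (\<sigma> (l + j))))"
    unfolding corrG.simps[of P k q] using k2 by simp
  also have "(\<Sum>\<sigma>\<in>?Pm. \<Sum>l\<in>{1..k-1}. (1 / (fact (l - 1) * fact (k - l))) *
          G l (\<lambda>j. if j = 1 then q 1 else q (\<sigma> j)) * P (k - l) (\<lambda>j. q (\<sigma> (l + j)))) =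
     (\<Sum>l\<in>{1..k-1}. \<Sum>\<sigma>\<in>?Pm. (1 / (fact (l - 1) * fact (k - l))) *
          G l (\<lambda>j. if j = 1 then q 1 else q (\<sigma> j)) * P (k - l) (\<lambda>j. q (\<sigma> (l + j))))"
    by (rule sum.swap)
  also have "\<dots> = (\<Sum>l\<in>{1..k-1}. \<Sum>S\<in>{S. S \<subseteq> {2..k} \<and> card S = l - 1}. F S)"
    by (rule sum.cong[OF refl]) (rule inner)
  also have "\<dots> = (\<Sum>S\<in>{S. S \<subseteq> {2..k} \<and> S \<noteq> {2..k}}. F S)"
  proof -
    let ?X = "{S. S \<subseteq> {2..k} \<and> S \<noteq> {2..k}}"
    have fX: "finite ?X" by (rule finite_subset[of _ "Pow {2..k}"]) auto
    have cX: "card S < k - 1" if "S \<in> ?X" for S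
    proof -
      have "card S < card {2..k}" using that by (intro psubset_card_mono) auto
      thus ?thesis by simp
    qed
    have "(\<Sum>l\<in>{1..k-1}. \<Sum>S\<in>{S \<in> ?X. card S + 1 = l}. F S) = (\<Sum>S\<in>?X. F S)"
    proof (rule sum.group[OF fX, of "{1..k-1}" "\<lambda>S. card S + 1" F])
      show "(\<lambda>S. card S + 1) ` ?X \<subseteq> {1..k-1}"
      proof
        fix x assume "x \<in> (\<lambda>S. card S + 1) ` ?X"
        then obtain S where "S \<in> ?X" "x = card S + 1" by blast
        thus "x \<in> {1..k-1}" using cX[of S] by simp
      qed
    qed simp
    moreover have "{S \<in> ?X. card S + 1 = l} = {S. S \<subseteq> {2..k} \<and> card S = l - 1}" if l: "l \<in> {1..k-1}" for l
    proof -
      have "card {2..k} = k - 1" by simp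
      moreover have "1 \<le> l" "l \<le> k - 1" using l by auto
      ultimately have ne: "card {2..k} \<noteq> l - 1" by arith
      show ?thesis using ne \<open>1 \<le> l\<close> by auto
    qed
    ultimately show ?thesis by simp
  qed
  finally show ?thesis unfolding F_def by simp
qed

end



definition blk :: "'a \<Rightarrow> 'a set set \<Rightarrow> 'a set" where
  "blk t \<pi> = (THE b. b \<in> \<pi> \<and> t \<in> b)"

lemma blk_uniq:
  assumes "partition_on T \<pi>" "b \<in> \<pi>" "b' \<in> \<pi>" "t \<in> b" "t \<in> b'"
  shows "b = b'"
proof (rule ccontr)
  assume "b \<noteq> b'"
  hence "b \<inter> b' = {}" using partition_onD2[OF assms(1)] assms(2,3) by (auto dest: disjointD)
  thus False using assms(4,5) by auto
qed

lemma blk_props: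
  assumes "partition_on T \<pi>" "t \<in> T"
  shows "blk t \<pi> \<in> \<pi> \<and> t \<in> blk t \<pi>"
proof -
  obtain b where b: "b \<in> \<pi>" "t \<in> b" using partition_onD1[OF assms(1)] assms(2) by auto
  have "blk t \<pi> = b" unfolding blk_def
    by (rule the_equality) (use b blk_uniq[OF assms(1)] in auto)
  thus ?thesis using b by simp
qed

lemma blk_eq:
  assumes "partition_on T \<pi>" "b \<in> \<pi>" "t \<in> b"
  shows "blk t \<pi> = b"
proof -
  have "t \<in> T" using partition_onD1[OF assms(1)] assms(2,3) by auto
  thus ?thesis using blk_props[OF assms(1)] blk_uniq[OF assms(1) _ assms(2) _ assms(3)] by blast
qed

lemma partition_split:
  fixes g :: "'a set \<Rightarrow> real"
  assumes fT: "finite T" and t: "t \<in> T"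
  shows "(\<Sum>\<pi>\<in>{\<pi>. partition_on T \<pi>}. \<Prod>B\<in>\<pi>. g B) =
    (\<Sum>S\<in>Pow (T - {t}). g (insert t S) * (\<Sum>\<pi>\<in>{\<pi>. partition_on (T - insert t S) \<pi>}. \<Prod>B\<in>\<pi>. g B))"
proof -
  let ?Sig = "Sigma (Pow (T - {t})) (\<lambda>S. {\<pi>. partition_on (T - insert t S) \<pi>})"
  have "(\<Sum>S\<in>Pow (T - {t}). g (insert t S) * (\<Sum>\<pi>\<in>{\<pi>. partition_on (T - insert t S) \<pi>}. \<Prod>B\<in>\<pi>. g B))
      = (\<Sum>S\<in>Pow (T - {t}). \<Sum>\<pi>\<in>{\<pi>. partition_on (T - insert t S) \<pi>}. g (insert t S) * (\<Prod>B\<in>\<pi>. g B))"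
    by (simp add: sum_distrib_left)
  also have "\<dots> = (\<Sum>p\<in>?Sig. g (insert t (fst p)) * (\<Prod>B\<in>snd p. g B))"
    by (subst sum.Sigma) (use fT finitely_many_partition_on in \<open>auto simp: split_def\<close>)
  also have "\<dots> = (\<Sum>\<pi>\<in>{\<pi>. partition_on T \<pi>}. \<Prod>B\<in>\<pi>. g B)"
  proof (rule sum.reindex_bij_witness[where j = "\<lambda>p. insert (insert t (fst p)) (snd p)"
        and i = "\<lambda>\<pi>. (blk t \<pi> - {t}, \<pi> - {blk t \<pi>})"])
    fix p assume p: "p \<in> ?Sig"
    obtain S \<pi>' where pe: "p = (S, \<pi>')" by force
    have S: "S \<subseteq> T - {t}" and pp: "partition_on (T - insert t S) \<pi>'" using p pe by auto
    have nin: "insert t S \<notin> \<pi>'" using partition_onD1[OF pp] by auto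
    have dj: "disjnt (insert t S) (\<Union>\<pi>')" using partition_onD1[OF pp] by (auto simp: disjnt_def)
    have pT: "partition_on T (insert (insert t S) \<pi>')"
      using partition_on_insert[OF dj] pp S t by auto
    have bl: "blk t (insert (insert t S) \<pi>') = insert t S" by (rule blk_eq[OF pT]) auto
    have tS: "t \<notin> S" using S by auto
    show "(blk t (insert (insert t (fst p)) (snd p)) - {t}, insert (insert t (fst p)) (snd p) - {blk t (insert (insert t (fst p)) (snd p))}) = p"
      using bl pe nin tS by auto
    show "insert (insert t (fst p)) (snd p) \<in> {\<pi>. partition_on T \<pi>}" using pT pe by simp
    have "finite \<pi>'" by (rule finite_elements[OF _ pp]) (use fT in simp)
    thus "(\<Prod>B\<in>insert (insert t (fst p)) (snd p). g B) = g (insert t (fst p)) * (\<Prod>B\<in>snd p. g B)"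
      using pe nin by simp
  next
    fix \<pi> assume "\<pi> \<in> {\<pi>. partition_on T \<pi>}"
    hence pp: "partition_on T \<pi>" by simp
    define b where "b = blk t \<pi>"
    have b: "b \<in> \<pi>" "t \<in> b" using blk_props[OF pp t] by (auto simp: b_def)
    have ib: "insert t (b - {t}) = b" using b by auto
    show "insert (insert t (fst (blk t \<pi> - {t}, \<pi> - {blk t \<pi>}))) (snd (blk t \<pi> - {t}, \<pi> - {blk t \<pi>})) = \<pi>"
      using ib b by (auto simp: b_def[symmetric])
    have dj: "disjnt b (\<Union>(\<pi> - {b}))"
      using partition_onD2[OF pp] b by (auto simp: disjnt_def dest: disjointD)
    have "partition_on T (insert b (\<pi> - {b}))" using pp b by (simp add: insert_absorb)
    hence "partition_on (T - b) (\<pi> - {b})" "b \<subseteq> T" using partition_on_insert[OF dj] by auto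
    thus "(blk t \<pi> - {t}, \<pi> - {blk t \<pi>}) \<in> ?Sig" using ib by (auto simp: b_def[symmetric])
  qed
  finally show ?thesis by simp
qed




lemma sorted_id: "j \<in> {1..k} \<Longrightarrow> sorted_list_of_set {1..k} ! (j - 1) = (j::nat)"
proof -
  assume j: "j \<in> {1..k}"
  have "{1..k} = {1..<Suc k}" by auto
  hence "sorted_list_of_set {1..k} = [1..<Suc k]" by simp
  thus ?thesis using j by (simp del: upt_Suc add: nth_upt)
qed

context symfam begin

lemma Gs_full: "Gs q {1..k} = G k q"
proof -
  have "Gs q {1..k} = G k (subtuple q {1..k})" by (simp add: Gs_def)
  also have "\<dots> = G k q"
  proof (rule Gloc)
    fix i assume i: "i \<in> {1..k}"
    show "subtuple q {1..k} i = q i" unfolding subtuple_def using sorted_id[OF i] by simp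
  qed
  finally show ?thesis .
qed

lemma Ps_full: "Ps q {1..k} = P k q"
proof -
  have "Ps q {1..k} = P k (subtuple q {1..k})" by (simp add: Ps_def)
  also have "\<dots> = P k q"
  proof (rule Ploc)
    fix i assume i: "i \<in> {1..k}"
    show "subtuple q {1..k} i = q i" unfolding subtuple_def using sorted_id[OF i] by simp
  qed
  finally show ?thesis .
qed

lemma G1: "G k x = P k x" if "k \<le> 1"
  using that by (subst corrG.simps) simp

lemma Gs_agree:
  assumes "finite B" "\<And>i. i \<in> B \<Longrightarrow> r i = r' i"
  shows "Gs r B = Gs r' B"
  unfolding Gs_def
proof (rule Gloc)
  fix i assume i: "i \<in> {1..card B}"
  have "sorted_list_of_set B ! (i - 1) \<in> set (sorted_list_of_set B)"
    by (rule nth_mem) (use i assms(1) in auto)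
  hence "sorted_list_of_set B ! (i - 1) \<in> B" using assms(1) by simp
  thus "subtuple r B i = subtuple r' B i" using assms(2) by (simp add: subtuple_def)
qed

lemma Ps_agree:
  assumes "finite B" "\<And>i. i \<in> B \<Longrightarrow> r i = r' i"
  shows "Ps r B = Ps r' B"
  unfolding Ps_def
proof (rule Ploc)
  fix i assume i: "i \<in> {1..card B}"
  have "sorted_list_of_set B ! (i - 1) \<in> set (sorted_list_of_set B)"
    by (rule nth_mem) (use i assms(1) in auto)
  hence "sorted_list_of_set B ! (i - 1) \<in> B" using assms(1) by simp
  thus "subtuple r B i = subtuple r' B i" using assms(2) by (simp add: subtuple_def)
qed

lemma ident_step:
  assumes kN: "k \<le> N" and symlt: "\<And>l. l < k \<Longrightarrow> SymG l"
    and identlt: "\<And>r U. good r \<Longrightarrow> finite U \<Longrightarrow> U \<noteq> {} \<Longrightarrow> card U < k \<Longrightarrow>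
        Ps r U = (\<Sum>\<pi>\<in>{\<pi>. partition_on U \<pi>}. \<Prod>B\<in>\<pi>. Gs r B)"
    and r: "good r" and fT: "finite T" and ne: "T \<noteq> {}" and cT: "card T = k"
  shows "Ps r T = (\<Sum>\<pi>\<in>{\<pi>. partition_on T \<pi>}. \<Prod>B\<in>\<pi>. Gs r B)"
proof -
  define e where "e = (\<lambda>j. sorted_list_of_set T ! (j - 1))"
  have be: "bij_betw e {1..k} T" using sub_bij[OF fT] cT by (simp add: e_def)
  have "0 < card T" using fT ne by (simp add: card_gt_0_iff)
  hence k1: "1 \<le> k" using cT by simp
  define t where "t = e 1"
  have t: "t \<in> T" unfolding t_def by (rule bij_betw_apply[OF be]) (use k1 in simp)
  define q where "q = r \<circ> e"
  have qsub: "subtuple r T = q" by (simp add: subtuple_comp q_def e_def)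
  have q: "good q" using r by (simp add: q_def good_comp)
  have injE: "inj_on e {1..k}" using be by (simp add: bij_betw_def)
  have eimg: "e ` {2..k} = T - {t}"
  proof -
    have d: "{2..k} = {1..k} - {1}" by auto
    have "e ` ({1..k} - {1}) = e ` {1..k} - e ` {1}"
      by (rule inj_on_image_set_diff[OF injE]) (use k1 in auto)
    hence "e ` {2..k} = e ` {1..k} - e ` {1}" unfolding d .
    thus ?thesis using be by (simp add: bij_betw_def t_def)
  qed
  let ?R = "Pow (T - {t}) - {T - {t}}"
  have star: "Ps r T = Gs r T + (\<Sum>S\<in>?R. Gs r (insert t S) * Ps r (T - insert t S))"
  proof (cases "k = 1")
    case True
    have "T = {t}" using True cT t by (metis card_1_singletonE singletonD)
    thus ?thesis using True cT by (simp add: Ps_def Gs_def G1)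
  next
    case False
    hence k2: "2 \<le> k" using k1 by simp
    have R: "G k q = P k q - (\<Sum>S\<in>{S. S \<subseteq> {2..k} \<and> S \<noteq> {2..k}}. Gs q (insert 1 S) * Ps q ({2..k} - S))"
      by (rule recR[OF k2 kN q symlt])
    have "(\<Sum>S\<in>{S. S \<subseteq> {2..k} \<and> S \<noteq> {2..k}}. Gs q (insert 1 S) * Ps q ({2..k} - S)) =
        (\<Sum>S\<in>?R. Gs r (insert t S) * Ps r (T - insert t S))"
    proof -
      have b2: "bij_betw e {2..k} (T - {t})"
        using inj_on_subset[OF injE] eimg by (simp add: bij_betw_def)
      have b1: "bij_betw (image e) {{2..k}} {T - {t}}" using eimg by (simp add: bij_betw_def)
      have bP: "bij_betw (image e) (Pow {2..k} - {{2..k}}) ?R"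
        by (rule bij_betw_DiffI[OF bij_betw_Pow[OF b2] b1]) auto
      have st: "{S. S \<subseteq> {2..k} \<and> S \<noteq> {2..k}} = Pow {2..k} - {{2..k}}" by auto
      have "(\<Sum>S\<in>?R. Gs r (insert t S) * Ps r (T - insert t S)) =
          (\<Sum>S\<in>Pow {2..k} - {{2..k}}. Gs r (insert t (e ` S)) * Ps r (T - insert t (e ` S)))"
        by (rule sum.reindex_bij_betw[OF bP, symmetric])
      also have "\<dots> = (\<Sum>S\<in>Pow {2..k} - {{2..k}}. Gs q (insert 1 S) * Ps q ({2..k} - S))"
      proof (rule sum.cong[OF refl])
        fix S assume S: "S \<in> Pow {2..k} - {{2..k}}"
        have sub1: "insert 1 S \<subseteq> {1..k}" using S k1 by auto
        have "insert 1 S \<noteq> {1..k}"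
        proof
          assume h: "insert 1 S = {1..k}"
          have "S = insert 1 S - {1}" using S by auto
          also have "\<dots> = {1..k} - {1}" using h by simp
          also have "\<dots> = {2..k}" by auto
          finally have "S = {2..k}" .
          thus False using S by simp
        qed
        hence "card (insert 1 S) < card {1..k}" using sub1 by (intro psubset_card_mono) auto
        hence c1: "card (insert 1 S) < k" by simp
        have fS: "finite S" using S finite_subset by auto
        have "Gs q (insert 1 S) = Gs r (e ` insert 1 S)"
          unfolding q_def by (rule Gs_comp[OF symlt[OF c1] _ r inj_on_subset[OF injE sub1]]) (use fS in simp)
        also have "e ` insert 1 S = insert t (e ` S)" by (simp add: t_def)
        finally have g1: "Gs q (insert 1 S) = Gs r (insert t (e ` S))" .
        have sub2: "{2..k} - S \<subseteq> {1..k}" by auto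
        have "card ({2..k} - S) \<le> card {2..k}" by (rule card_mono) auto
        hence c2: "card ({2..k} - S) \<le> N" using kN by simp
        have "Ps q ({2..k} - S) = Ps r (e ` ({2..k} - S))"
          unfolding q_def by (rule Ps_comp[OF c2 _ r inj_on_subset[OF injE sub2]]) simp
        also have "e ` ({2..k} - S) = e ` {2..k} - e ` S"
          by (rule inj_on_image_set_diff[OF injE]) (use S in auto)
        also have "\<dots> = T - insert t (e ` S)" using eimg by auto
        finally have g2: "Ps q ({2..k} - S) = Ps r (T - insert t (e ` S))" .
        show "Gs r (insert t (e ` S)) * Ps r (T - insert t (e ` S)) = Gs q (insert 1 S) * Ps q ({2..k} - S)"
          using g1 g2 by simp
      qed
      finally show ?thesis using st by simp
    qed
    moreover have "Ps r T = P k q" using cT qsub by (simp add: Ps_def)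
    moreover have "Gs r T = G k q" using cT qsub by (simp add: Gs_def)
    ultimately show ?thesis using R by simp
  qed
  have fR: "finite (Pow (T - {t}))" using fT by simp
  have "(\<Sum>\<pi>\<in>{\<pi>. partition_on T \<pi>}. \<Prod>B\<in>\<pi>. Gs r B) = (\<Sum>S\<in>Pow (T - {t}).
      Gs r (insert t S) * (\<Sum>\<pi>\<in>{\<pi>. partition_on (T - insert t S) \<pi>}. \<Prod>B\<in>\<pi>. Gs r B))"
    by (rule partition_split[OF fT t])
  also have "\<dots> = Gs r (insert t (T - {t})) * (\<Sum>\<pi>\<in>{\<pi>. partition_on (T - insert t (T - {t})) \<pi>}. \<Prod>B\<in>\<pi>. Gs r B)
      + (\<Sum>S\<in>?R. Gs r (insert t S) * (\<Sum>\<pi>\<in>{\<pi>. partition_on (T - insert t S) \<pi>}. \<Prod>B\<in>\<pi>. Gs r B))"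
    by (rule sum.remove[OF fR]) simp
  also have "Gs r (insert t (T - {t})) * (\<Sum>\<pi>\<in>{\<pi>. partition_on (T - insert t (T - {t})) \<pi>}. \<Prod>B\<in>\<pi>. Gs r B) = Gs r T"
  proof -
    have "insert t (T - {t}) = T" using t by auto
    moreover have "(\<Sum>\<pi>\<in>{\<pi>. partition_on {} \<pi>}. \<Prod>B\<in>\<pi>. Gs r B) = 1" by (simp add: partition_on_empty)
    ultimately show ?thesis by simp
  qed
  also have "(\<Sum>S\<in>?R. Gs r (insert t S) * (\<Sum>\<pi>\<in>{\<pi>. partition_on (T - insert t S) \<pi>}. \<Prod>B\<in>\<pi>. Gs r B))
      = (\<Sum>S\<in>?R. Gs r (insert t S) * Ps r (T - insert t S))"
  proof (rule sum.cong[OF refl])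
    fix S assume S: "S \<in> ?R"
    have ne2: "T - insert t S \<noteq> {}" using S by auto
    have "card (T - insert t S) < card T" using t fT by (intro psubset_card_mono) auto
    hence "Ps r (T - insert t S) = (\<Sum>\<pi>\<in>{\<pi>. partition_on (T - insert t S) \<pi>}. \<Prod>B\<in>\<pi>. Gs r B)"
      using identlt[OF r _ ne2] fT cT by simp
    thus "Gs r (insert t S) * (\<Sum>\<pi>\<in>{\<pi>. partition_on (T - insert t S) \<pi>}. \<Prod>B\<in>\<pi>. Gs r B)
      = Gs r (insert t S) * Ps r (T - insert t S)" by simp
  qed
  finally show ?thesis using star by simp
qed

end



context symfam begin

definition Ident where
  "Ident k \<longleftrightarrow> (\<forall>r T. good r \<longrightarrow> finite T \<longrightarrow> T \<noteq> {} \<longrightarrow> card T = k \<longrightarrow>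
      Ps r T = (\<Sum>\<pi>\<in>{\<pi>. partition_on T \<pi>}. \<Prod>B\<in>\<pi>. Gs r B))"

lemma parts_split:
  fixes k :: nat
  assumes k2: "1 \<le> k"
  shows "{\<pi>. partition_on {1..k} \<pi>} = insert {{1..k}} {\<pi>. partition_on {1..k} \<pi> \<and> card \<pi> \<ge> 2}"
proof (rule set_eqI, rule iffI)
  fix \<pi> assume "\<pi> \<in> {\<pi>. partition_on {1..k} \<pi>}"
  hence pp: "partition_on {1..k} \<pi>" by simp
  have fp: "finite \<pi>" by (rule finite_elements[OF _ pp]) simp
  show "\<pi> \<in> insert {{1..k}} {\<pi>. partition_on {1..k} \<pi> \<and> card \<pi> \<ge> 2}"
  proof (cases "card \<pi> \<ge> 2")
    case False
    hence "card \<pi> = 0 \<or> card \<pi> = 1" by auto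
    thus ?thesis
    proof
      assume "card \<pi> = 0"
      hence "\<pi> = {}" using fp by simp
      hence "{1..k} = {}" using partition_onD1[OF pp] by simp
      thus ?thesis using k2 by simp
    next
      assume "card \<pi> = 1"
      then obtain b where "\<pi> = {b}" by (rule card_1_singletonE)
      moreover hence "b = {1..k}" using partition_onD1[OF pp] by simp
      ultimately show ?thesis by simp
    qed
  qed (use pp in simp)
next
  fix \<pi> assume "\<pi> \<in> insert {{1..k}} {\<pi>. partition_on {1..k} \<pi> \<and> card \<pi> \<ge> 2}"
  thus "\<pi> \<in> {\<pi>. partition_on {1..k} \<pi>}" using k2 partition_on_space[of "{1..k}"] by auto
qed

lemma expand:
  assumes k2: "2 \<le> k" and id: "Ident k" and q: "good q"
  shows "G k q = P k q - (\<Sum>\<pi>\<in>{\<pi>. partition_on {1..k} \<pi> \<and> card \<pi> \<ge> 2}. \<Prod>B\<in>\<pi>. Gs q B)"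
proof -
  let ?X = "{\<pi>. partition_on {1..k} \<pi> \<and> card \<pi> \<ge> 2}"
  have fX: "finite ?X"
    by (rule finite_subset[OF _ finitely_many_partition_on[of "{1..k}"]]) auto
  have nX: "{{1..k}} \<notin> ?X" by simp
  have "P k q = Ps q {1..k}" by (rule Ps_full[symmetric])
  also have "\<dots> = (\<Sum>\<pi>\<in>{\<pi>. partition_on {1..k} \<pi>}. \<Prod>B\<in>\<pi>. Gs q B)"
    using id q k2 by (simp add: Ident_def)
  also have "\<dots> = (\<Prod>B\<in>{{1..k}}. Gs q B) + (\<Sum>\<pi>\<in>?X. \<Prod>B\<in>\<pi>. Gs q B)"
  proof -
    have k1: "1 \<le> k" using k2 by simp
    show ?thesis unfolding parts_split[OF k1] by (rule sum.insert[OF fX nX])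
  qed
  also have "(\<Prod>B\<in>{{1..k}}. Gs q B) = G k q" using Gs_full[of q k] by simp
  finally show ?thesis by simp
qed

lemma perm_part:
  assumes r: "\<rho> permutes {1..k}" and p: "partition_on {1..k} \<pi> \<and> card \<pi> \<ge> 2"
  shows "partition_on {1..k} ((`) \<rho> ` \<pi>) \<and> card ((`) \<rho> ` \<pi>) \<ge> 2"
proof -
  have inj: "inj \<rho>" using r by (rule permutes_inj)
  have pp: "partition_on {1..k} \<pi>" using p by simp
  have "partition_on (\<rho> ` {1..k}) ((`) \<rho> ` \<pi> - {{}})"
    by (rule partition_on_inj_image[OF pp]) (use inj inj_on_subset in blast)
  moreover have "\<rho> ` {1..k} = {1..k}" by (rule permutes_image[OF r])
  moreover have "(`) \<rho> ` \<pi> - {{}} = (`) \<rho> ` \<pi>" using partition_onD3[OF pp] by auto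
  ultimately have "partition_on {1..k} ((`) \<rho> ` \<pi>)" by simp
  moreover have "inj_on ((`) \<rho>) \<pi>" by (rule inj_on_image) (use inj inj_on_subset in blast)
  hence "card ((`) \<rho> ` \<pi>) = card \<pi>" by (rule card_image)
  ultimately show ?thesis using p by simp
qed

lemma block_lt:
  assumes p: "partition_on {1..k} \<pi>" "card \<pi> \<ge> 2" and B: "B \<in> \<pi>"
  shows "card B < k"
proof -
  have fp: "finite \<pi>" by (rule finite_elements[OF _ p(1)]) simp
  have "\<pi> - {B} \<noteq> {}"
  proof
    assume "\<pi> - {B} = {}"
    hence "\<pi> \<subseteq> {B}" by auto
    hence "card \<pi> \<le> 1" using card_mono[of "{B}" \<pi>] by simp
    thus False using p(2) by simp
  qed
  then obtain B' where B': "B' \<in> \<pi>" "B' \<noteq> B" by auto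
  have "B' \<noteq> {}" using partition_onD3[OF p(1)] B' by auto
  then obtain x where x: "x \<in> B'" by auto
  have "x \<notin> B" using partition_onD2[OF p(1)] B' B x by (auto dest: disjointD)
  moreover have "x \<in> {1..k}" using partition_onD1[OF p(1)] B' x by auto
  moreover have "B \<subseteq> {1..k}" using partition_onD1[OF p(1)] B by auto
  ultimately have "B \<subset> {1..k}" by auto
  hence "card B < card {1..k}" by (rule psubset_card_mono[rotated]) simp
  thus ?thesis by simp
qed

lemma sym_step:
  assumes kN: "k \<le> N" and k2: "2 \<le> k" and symlt: "\<And>l. l < k \<Longrightarrow> SymG l" and id: "Ident k"
  shows "SymG k"
  unfolding SymG_def
proof (intro allI impI)
  fix q :: "nat \<Rightarrow> nat" and \<tau> assume q: "good q" and t: "\<tau> permutes {1..k}"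
  let ?X = "{\<pi>. partition_on {1..k} \<pi> \<and> card \<pi> \<ge> 2}"
  have inj: "inj \<tau>" using t by (rule permutes_inj)
  have surj: "surj \<tau>" using t by (rule permutes_surj)
  have ti: "inv \<tau> permutes {1..k}" using t by (rule permutes_inv)
  have "(\<Sum>\<pi>\<in>?X. \<Prod>B\<in>\<pi>. Gs (q \<circ> \<tau>) B) = (\<Sum>\<pi>\<in>?X. \<Prod>B\<in>\<pi>. Gs q B)"
  proof (rule sum.reindex_bij_witness[where j = "(`) ((`) \<tau>)" and i = "(`) ((`) (inv \<tau>))"])
    fix a assume a: "a \<in> ?X"
    have "(`) (inv \<tau>) ` (`) \<tau> ` a = (\<lambda>B. inv \<tau> ` \<tau> ` B) ` a" by (simp add: image_image)
    also have "\<dots> = a" using inj by (simp add: image_inv_f_f)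
    finally show "(`) ((`) (inv \<tau>)) ((`) ((`) \<tau>) a) = a" .
    show "(`) ((`) \<tau>) a \<in> ?X" using perm_part[OF t] a by simp
    have ia: "inj_on ((`) \<tau>) a" by (rule inj_on_image) (use inj inj_on_subset in blast)
    have "(\<Prod>B\<in>(`) \<tau> ` a. Gs q B) = (\<Prod>B\<in>a. Gs q (\<tau> ` B))"
      by (rule prod.reindex[OF ia, unfolded o_def])
    also have "\<dots> = (\<Prod>B\<in>a. Gs (q \<circ> \<tau>) B)"
    proof (rule prod.cong[OF refl])
      fix B assume B: "B \<in> a"
      have pa: "partition_on {1..k} a" "card a \<ge> 2" using a by auto
      have cB: "card B < k" by (rule block_lt[OF pa B])
      have fB: "finite B" using partition_onD1[OF pa(1)] B by (metis Union_upper finite_atLeastAtMost finite_subset)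
      show "Gs q (\<tau> ` B) = Gs (q \<circ> \<tau>) B"
        by (rule Gs_comp[OF symlt[OF cB] fB q inj_on_subset[OF inj], symmetric]) simp
    qed
    finally show "(\<Prod>B\<in>(`) ((`) \<tau>) a. Gs q B) = (\<Prod>B\<in>a. Gs (q \<circ> \<tau>) B)" .
  next
    fix b assume b: "b \<in> ?X"
    have "(`) \<tau> ` (`) (inv \<tau>) ` b = (\<lambda>B. \<tau> ` inv \<tau> ` B) ` b" by (simp add: image_image)
    also have "\<dots> = b" using surj by (simp add: image_f_inv_f)
    finally show "(`) ((`) \<tau>) ((`) ((`) (inv \<tau>)) b) = b" .
    show "(`) ((`) (inv \<tau>)) b \<in> ?X" using perm_part[OF ti] b by simp
  qed
  moreover have "P k (q \<circ> \<tau>) = P k q" by (rule Psym[OF kN q t])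
  ultimately show "G k (q \<circ> \<tau>) = G k q"
    using expand[OF k2 id q] expand[OF k2 id good_comp[OF q]] by simp
qed

lemma main_ind: "k \<le> N \<Longrightarrow> SymG k \<and> Ident k"
proof (induction k rule: less_induct)
  case (less k)
  have symlt: "\<And>l. l < k \<Longrightarrow> SymG l" using less by auto
  have identlt: "Ps r U = (\<Sum>\<pi>\<in>{\<pi>. partition_on U \<pi>}. \<Prod>B\<in>\<pi>. Gs r B)"
    if "good r" "finite U" "U \<noteq> {}" "card U < k" for r U
    using less.IH[of "card U"] less.prems that by (auto simp: Ident_def)
  have id: "Ident k" unfolding Ident_def
    using ident_step[OF less.prems symlt identlt] by blast
  have "SymG k"
  proof (cases "k \<le> 1")
    case True
    show ?thesis unfolding SymG_def using True Psym[OF less.prems] by (simp add: G1)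
  next
    case False
    thus ?thesis using sym_step[OF less.prems _ symlt id] by simp
  qed
  thus ?case using id by simp
qed

end



lemma probP_symfam:
  assumes sym: "symmetric_events M E N"
  shows "symfam (probP M E N) N"
proof
  fix k q q' assume h: "\<And>i. i \<in> {1..k} \<Longrightarrow> (q::nat\<Rightarrow>nat) i = q' i"
  have "jointP M E N (\<lambda>i. if i \<le> k then q i else s i) = jointP M E N (\<lambda>i. if i \<le> k then q' i else s i)" for s
    unfolding jointP_def by (rule arg_cong[where f="measure M"]) (use h in auto)
  thus "probP M E N k q = probP M E N k q'" by (simp add: probP_def)
next
  fix k q \<tau> assume kN: "k \<le> N" and q: "good q" and t: "\<tau> permutes {1..k}"
  have tN: "\<tau> permutes {1..N}" by (rule permutes_subset[OF t]) (use kN in auto)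
  show "probP M E N k (q \<circ> \<tau>) = probP M E N k q"
    unfolding probP_def
  proof (rule sum.cong[OF refl])
    fix s assume s: "s \<in> PiE {k+1..N} (\<lambda>_. {0::nat,1})"
    define R where "R = (\<lambda>i. if i \<le> k then q i else s i)"
    have e: "(\<lambda>i. if i \<le> k then (q \<circ> \<tau>) i else s i) = R \<circ> \<tau>"
    proof
      fix i
      show "(if i \<le> k then (q \<circ> \<tau>) i else s i) = (R \<circ> \<tau>) i"
      proof (cases "i \<in> {1..k}")
        case True
        hence "\<tau> i \<in> {1..k}" using t by (simp only: permutes_in_image)
        thus ?thesis using True by (simp add: R_def)
      next
        case False
        hence "\<tau> i = i" using t by (simp add: permutes_def)
        thus ?thesis by (simp add: R_def)
      qed
    qed
    have Rg: "\<forall>i\<in>{1..N}. R i \<in> {0,1}"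
    proof
      fix i assume i: "i \<in> {1..N}"
      show "R i \<in> {0,1}"
      proof (cases "i \<le> k")
        case True thus ?thesis using q by (simp add: R_def good_def)
      next
        case False
        hence "i \<in> {k+1..N}" using i by auto
        thus ?thesis using s False by (auto simp: R_def PiE_def Pi_def)
      qed
    qed
    have "jointP M E N R = jointP M E N (R \<circ> \<tau>)"
      using sym Rg tN unfolding symmetric_events_def by blast
    thus "jointP M E N (\<lambda>i. if i \<le> k then (q \<circ> \<tau>) i else s i) = jointP M E N (\<lambda>i. if i \<le> k then q i else s i)"
      using e by (simp add: R_def)
  qed
qed

theorem mainTheorem3:
  fixes M :: "'a measure" and E :: "nat \<Rightarrow> 'a set" and N k :: nat and r :: "nat \<Rightarrow> nat"
  assumes "prob_space M"
    and "\<forall>i\<in>{1..N}. E i \<in> sets M"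
    and "symmetric_events M E N"
    and "k \<in> {1..N}"
    and "\<forall>i\<in>{1..k}. r i \<in> {0,1}"
  shows "probP M E N k r =
           (\<Sum>\<pi>\<in>{\<pi>. partition_on {1..k} \<pi>}.
              \<Prod>B\<in>\<pi>. corrG (probP M E N) (card B) (subtuple r B))
       \<and> corrG (probP M E N) k r =
           probP M E N k r -
           (\<Sum>\<pi>\<in>{\<pi>. partition_on {1..k} \<pi> \<and> card \<pi> \<ge> 2}.
              \<Prod>B\<in>\<pi>. corrG (probP M E N) (card B) (subtuple r B))"
proof -
  interpret S: symfam "probP M E N" N by (rule probP_symfam[OF assms(3)])
  have k1: "1 \<le> k" and kN: "k \<le> N" using assms(4) by auto
  define r' where "r' = (\<lambda>i. if i \<in> {1..k} then r i else 0)"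
  have g: "good r'" using assms(5) by (auto simp: good_def r'_def)
  have agree: "\<And>i. i \<in> {1..k} \<Longrightarrow> r' i = r i" by (simp add: r'_def)
  have id: "S.Ident k" using S.main_ind[OF kN] by simp
  have "probP M E N k r = probP M E N k r'" by (rule S.Ploc) (simp add: agree)
  also have "\<dots> = S.Ps r' {1..k}" by (rule S.Ps_full[symmetric])
  also have "\<dots> = (\<Sum>\<pi>\<in>{\<pi>. partition_on {1..k} \<pi>}. \<Prod>B\<in>\<pi>. S.Gs r' B)"
    using id g k1 unfolding S.Ident_def by simp
  also have "\<dots> = (\<Sum>\<pi>\<in>{\<pi>. partition_on {1..k} \<pi>}. \<Prod>B\<in>\<pi>. corrG (probP M E N) (card B) (subtuple r B))"
  proof (rule sum.cong[OF refl], rule prod.cong[OF refl])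
    fix \<pi> B assume p: "\<pi> \<in> {\<pi>. partition_on {1..k} \<pi>}" and B: "B \<in> \<pi>"
    have sub: "B \<subseteq> {1..k}" using partition_onD1[of "{1..k}" \<pi>] p B by auto
    hence "S.Gs r' B = S.Gs r B" by (intro S.Gs_agree) (use sub finite_subset in \<open>auto simp: r'_def\<close>)
    thus "S.Gs r' B = corrG (probP M E N) (card B) (subtuple r B)" by (simp add: S.Gs_def)
  qed
  finally have c1: "probP M E N k r = (\<Sum>\<pi>\<in>{\<pi>. partition_on {1..k} \<pi>}. \<Prod>B\<in>\<pi>. corrG (probP M E N) (card B) (subtuple r B))" .
  let ?X = "{\<pi>. partition_on {1..k} \<pi> \<and> card \<pi> \<ge> 2}"
  have fX: "finite ?X"
    by (rule finite_subset[OF _ finitely_many_partition_on[of "{1..k}"]]) auto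
  have nX: "{{1..k}} \<notin> ?X" by simp
  have "probP M E N k r = (\<Prod>B\<in>{{1..k}}. corrG (probP M E N) (card B) (subtuple r B))
      + (\<Sum>\<pi>\<in>?X. \<Prod>B\<in>\<pi>. corrG (probP M E N) (card B) (subtuple r B))"
    unfolding c1 S.parts_split[OF k1] by (rule sum.insert[OF fX nX])
  moreover have "(\<Prod>B\<in>{{1..k}}. corrG (probP M E N) (card B) (subtuple r B)) = corrG (probP M E N) k r"
    using S.Gs_full[of r k] by (simp add: S.Gs_def)
  ultimately show ?thesis using c1 by simp
qed



end
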